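(* As formal power series in $q$, $$A(q):=\frac{1}{(q;q)_\infty}\sum_{n\ge1}\frac{(-1)^{n-1}n\,q^{\frac{n(n+1)}{2}}}{1-q^n}=\sum_{\lambda}t_s(\lambda)\,q^{|\lambda|},$$ where the sum on the right runs over all partitions $\lambda$ of all positive integers.
   Context: $(q;q)_\infty:=\prod_{n\ge1}(1-q^n)$. For a partition $\lambda$, $|\lambda|$ denotes the integer it partitions. Let $n_\lambda$ be the largest integer $n$ such that $\lambda$ contains parts of each size $1,2,\ldots,n$ (so $n_\lambda=0$ if $1$ is not a part), and let $m_k$ be the multiplicity of the part $k$ in $\lambda$. The signed triangular weight of $\lambda$ is $t_s(\lambda):=\sum_{k=1}^{n_\lambda}(-1)^{k-1}k\,m_k$ (so $t_s(\lambda)=0$ if $\lambda$ has no part equal to $1$). *)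

theory Defs
  imports "HOL-Computational_Algebra.Formal_Power_Series" "HOL-Library.Multiset"
begin

definition partitions :: "nat \<Rightarrow> nat multiset set" where
  "partitions N = {lam. (\<forall>k\<in>#lam. 0 < k) \<and> sum_mset lam = N}"

definition n_lam :: "nat multiset \<Rightarrow> nat" where
  "n_lam lam = (GREATEST n. \<forall>k\<in>{1..n}. k \<in># lam)"

definition t_s :: "nat multiset \<Rightarrow> int" where
  "t_s lam = (\<Sum>k=1..n_lam lam. (-1)^(k-1) * int k * int (count lam k))"

text \<open>The n-th summand (n \<ge> 1) of the series defining A(q), before dividing by (q;q)_inf.\<close>
definition A_term :: "nat \<Rightarrow> rat fps" where
  "A_term n = fps_const (of_int ((-1)^(n-1) * int n)) * fps_X ^ (n*(n+1) div 2)
              / (1 - fps_X ^ n)"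

end

theory Submission
  imports Defs
begin

unbundle fps_syntax

lemma mem_le_sum_mset: "x \<in># (lam::nat multiset) \<Longrightarrow> x \<le> sum_mset lam"
proof -
  assume "x \<in># lam"
  then obtain r where "lam = add_mset x r" by (metis mset_add)
  then show ?thesis by simp
qed

lemma size_le_sum_mset: "(\<forall>k\<in>#lam. 0 < k) \<Longrightarrow> size lam \<le> sum_mset (lam::nat multiset)"
proof (induction lam)
  case empty
  then show ?case by simp
next
  case (add x lam)
  then show ?case by simp
qed

lemma finite_partitions: "finite (partitions N)"
proof -
  have "partitions N \<subseteq> (\<Union>n\<in>{..N}. multisets_of_size {1..N} n)"
  proof
    fix lam assume "lam \<in> partitions N"
    then have p: "\<forall>k\<in>#lam. 0 < k" "sum_mset lam = N" by (auto simp: partitions_def)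
    then have "set_mset lam \<subseteq> {1..N}" using mem_le_sum_mset
      by (metis Suc_leI atLeastAtMost_iff subsetI One_nat_def)
    moreover have "size lam \<le> N" using size_le_sum_mset[OF p(1)] p(2) by simp
    ultimately show "lam \<in> (\<Union>n\<in>{..N}. multisets_of_size {1..N} n)"
      by (auto simp: multisets_of_size_def)
  qed
  moreover have "finite (\<Union>n\<in>{..N}. multisets_of_size {1..N} n)" by auto
  ultimately show ?thesis by (rule finite_subset)
qed

definition Pm :: "nat \<Rightarrow> nat \<Rightarrow> nat multiset set" where
  "Pm N M = {lam \<in> partitions N. set_mset lam \<subseteq> {1..M}}"

definition wt :: "(nat \<Rightarrow> nat \<Rightarrow> rat) \<Rightarrow> nat \<Rightarrow> nat multiset \<Rightarrow> rat" where
  "wt phi M lam = (\<Prod>j=1..M. phi j (count lam j))"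

definition GF :: "(nat \<Rightarrow> nat \<Rightarrow> rat) \<Rightarrow> nat \<Rightarrow> rat fps" where
  "GF phi M = Abs_fps (\<lambda>N. \<Sum>lam\<in>Pm N M. wt phi M lam)"

definition geo :: "(nat \<Rightarrow> nat \<Rightarrow> rat) \<Rightarrow> nat \<Rightarrow> rat fps" where
  "geo phi j = Abs_fps (\<lambda>N. if j dvd N then phi j (N div j) else 0)"

lemma finite_Pm: "finite (Pm N M)"
  unfolding Pm_def using finite_partitions by auto

lemma GF_0: "GF phi 0 = 1"
proof (rule fps_ext)
  fix N
  have "Pm N 0 = (if N = 0 then {{#}} else {})"
    by (auto simp: Pm_def partitions_def)
  then show "GF phi 0 $ N = 1 $ N"
    by (simp add: GF_def wt_def)
qed


lemma wt_Suc_split: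
  assumes "set_mset mu \<subseteq> {1..M}"
  shows "wt phi (Suc M) (mu + replicate_mset m (Suc M)) = wt phi M mu * phi (Suc M) m"
proof -
  have c: "count mu (Suc M) = 0" using assms by (auto simp: not_in_iff[symmetric])
  have "wt phi (Suc M) (mu + replicate_mset m (Suc M)) =
        (\<Prod>j=1..M. phi j (count (mu + replicate_mset m (Suc M)) j)) * phi (Suc M) m"
    unfolding wt_def by (simp add: c)
  also have "(\<Prod>j=1..M. phi j (count (mu + replicate_mset m (Suc M)) j)) = wt phi M mu"
    unfolding wt_def by (intro prod.cong) auto
  finally show ?thesis .
qed

lemma GF_Suc_lhs:
  "GF phi (Suc M) $ N =
    (\<Sum>m\<in>{..N div Suc M}. (\<Sum>mu\<in>Pm (N - Suc M * m) M. wt phi M mu) * phi (Suc M) m)"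
proof -
  define j where "j = Suc M"
  have "(\<Sum>m\<in>{..N div j}. (\<Sum>mu\<in>Pm (N - j * m) M. wt phi M mu) * phi j m)
      = (\<Sum>m\<in>{..N div j}. \<Sum>mu\<in>Pm (N - j * m) M. wt phi M mu * phi j m)"
    by (simp add: sum_distrib_right)
  also have "\<dots> = (\<Sum>(m,mu)\<in>Sigma {..N div j} (\<lambda>m. Pm (N - j * m) M). wt phi M mu * phi j m)"
    by (rule sum.Sigma) (auto simp: finite_Pm)
  also have "\<dots> = (\<Sum>lam\<in>Pm N j. wt phi j lam)"
  proof (rule sum.reindex_bij_witness[where i = "\<lambda>lam. (count lam j, filter_mset (\<lambda>x. x \<noteq> j) lam)"
        and j = "\<lambda>(m,mu). mu + replicate_mset m j"])
    fix lam assume lam: "lam \<in> Pm N j"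
    show "(case (count lam j, filter_mset (\<lambda>x. x \<noteq> j) lam) of (m, mu) \<Rightarrow> mu + replicate_mset m j) = lam"
      by (auto simp: multiset_eq_iff)
    have decomp: "lam = filter_mset (\<lambda>x. x \<noteq> j) lam + replicate_mset (count lam j) j"
      by (auto simp: multiset_eq_iff)
    have sN: "sum_mset lam = N" using lam by (auto simp: Pm_def partitions_def)
    have "sum_mset lam = sum_mset (filter_mset (\<lambda>x. x \<noteq> j) lam) + count lam j * j"
      by (subst decomp) simp
    then have s: "sum_mset (filter_mset (\<lambda>x. x \<noteq> j) lam) = N - j * count lam j"
      and le: "j * count lam j \<le> N" using sN by (auto simp: mult.commute)
    have "count lam j \<le> N div j" using le unfolding j_def
      by (metis div_le_mono nonzero_mult_div_cancel_left Zero_not_Suc)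
    moreover have "filter_mset (\<lambda>x. x \<noteq> j) lam \<in> Pm (N - j * count lam j) M"
      using lam s by (auto simp: Pm_def partitions_def j_def)
    ultimately show "(count lam j, filter_mset (\<lambda>x. x \<noteq> j) lam) \<in> Sigma {..N div j} (\<lambda>m. Pm (N - j * m) M)"
      by auto
  next
    fix a assume a: "a \<in> Sigma {..N div j} (\<lambda>m. Pm (N - j * m) M)"
    obtain m mu where am: "a = (m, mu)" by (cases a)
    with a have m: "m \<le> N div j" and mu: "mu \<in> Pm (N - j * m) M" by auto
    have setmu: "set_mset mu \<subseteq> {1..M}" using mu by (auto simp: Pm_def)
    have c: "count mu j = 0" using setmu unfolding j_def by (auto simp: not_in_iff[symmetric])
    have fm: "filter_mset (\<lambda>x. x \<noteq> j) mu = mu"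
      using setmu unfolding j_def by (auto simp: filter_mset_eq_conv)
    show "(count (case a of (m, mu) \<Rightarrow> mu + replicate_mset m j) j,
           filter_mset (\<lambda>x. x \<noteq> j) (case a of (m, mu) \<Rightarrow> mu + replicate_mset m j)) = a"
      using am c fm by simp
    have jm: "j * m \<le> N" using m
      by (metis div_mult_self1_is_m le_iff_add mult.commute times_div_less_eq_dividend order_trans mult_le_mono2 j_def zero_less_Suc)
    have "sum_mset (mu + replicate_mset m j) = N"
      using mu jm by (auto simp: Pm_def partitions_def mult.commute)
    then show "(case a of (m, mu) \<Rightarrow> mu + replicate_mset m j) \<in> Pm N j"
      using mu am by (auto simp: Pm_def partitions_def j_def)
    show "wt phi j (case a of (m, mu) \<Rightarrow> mu + replicate_mset m j) = (case a of (m, mu) \<Rightarrow> wt phi M mu * phi j m)"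
      using am setmu wt_Suc_split unfolding j_def by simp
  qed
  finally show ?thesis unfolding j_def GF_def by simp
qed


lemma mult_geo_nth:
  assumes j: "0 < j"
  shows "(F * geo phi j) $ N = (\<Sum>m\<in>{..N div j}. F $ (N - j * m) * phi j m)"
proof -
  have "(F * geo phi j) $ N = (\<Sum>i\<in>{..N}. F $ i * (if j dvd (N - i) then phi j ((N - i) div j) else 0))"
    by (simp add: fps_mult_nth geo_def atLeast0AtMost)
  also have "\<dots> = (\<Sum>i\<in>{i\<in>{..N}. j dvd (N - i)}. F $ i * phi j ((N - i) div j))"
    by (rule sum.mono_neutral_cong_right) auto
  also have "{i\<in>{..N}. j dvd (N - i)} = (\<lambda>m. N - j * m) ` {..N div j}"
  proof (rule set_eqI, rule iffI)
    fix i assume "i \<in> {i\<in>{..N}. j dvd (N - i)}"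
    then obtain m where i: "i \<le> N" "N - i = j * m" by (auto elim: dvdE)
    then have "m \<le> N div j" using j
      by (metis diff_le_self div_le_mono nonzero_mult_div_cancel_left not_gr0)
    moreover have "i = N - j * m" using i by simp
    ultimately show "i \<in> (\<lambda>m. N - j * m) ` {..N div j}" by auto
  next
    fix i assume "i \<in> (\<lambda>m. N - j * m) ` {..N div j}"
    then obtain m where m: "m \<le> N div j" "i = N - j * m" by auto
    have "j * m \<le> N" using m(1)
      by (metis dual_order.trans mult_le_mono2 times_div_less_eq_dividend)
    then show "i \<in> {i\<in>{..N}. j dvd (N - i)}" using m by auto
  qed
  also have "(\<Sum>i\<in>(\<lambda>m. N - j * m) ` {..N div j}. F $ i * phi j ((N - i) div j))
      = (\<Sum>m\<in>{..N div j}. F $ (N - j * m) * phi j ((N - (N - j * m)) div j))"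
  proof (rule sum.reindex[unfolded comp_def])
    show "inj_on (\<lambda>m. N - j * m) {..N div j}"
    proof (rule inj_onI)
      fix a b assume a: "a \<in> {..N div j}" and b: "b \<in> {..N div j}" and e: "N - j * a = N - j * b"
      have "j * a \<le> N" "j * b \<le> N" using a b
        by (metis atMost_iff dual_order.trans mult_le_mono2 times_div_less_eq_dividend)+
      then have "j * a = j * b" using e by linarith
      then show "a = b" using j by simp
    qed
  qed
  also have "\<dots> = (\<Sum>m\<in>{..N div j}. F $ (N - j * m) * phi j m)"
  proof (rule sum.cong)
    fix m assume "m \<in> {..N div j}"
    then have "j * m \<le> N" by (metis atMost_iff dual_order.trans mult_le_mono2 times_div_less_eq_dividend)
    then show "F $ (N - j * m) * phi j ((N - (N - j * m)) div j) = F $ (N - j * m) * phi j m"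
      using j by simp
  qed simp
  finally show ?thesis .
qed

lemma GF_Suc: "GF phi (Suc M) = GF phi M * geo phi (Suc M)"
proof (rule fps_ext)
  fix N
  show "GF phi (Suc M) $ N = (GF phi M * geo phi (Suc M)) $ N"
    unfolding GF_Suc_lhs mult_geo_nth[OF zero_less_Suc] by (simp add: GF_def)
qed

lemma GF_prod: "GF phi M = (\<Prod>j=1..M. geo phi j)"
  by (induction M) (simp_all add: GF_0 GF_Suc)


lemma one_minus_mult_nth:
  "((1 - fps_X ^ j) * (f :: rat fps)) $ N = f $ N - (if j \<le> N then f $ (N - j) else 0)"
proof -
  have "(1 - fps_X ^ j) * f = f - fps_X ^ j * f" by (simp add: algebra_simps)
  then show ?thesis by (simp add: fps_X_power_mult_nth)
qed

definition Ej :: "nat \<Rightarrow> rat fps" where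
  "Ej j = Abs_fps (\<lambda>N. if j dvd N \<and> 0 < N then 1 else 0)"
definition Gj :: "nat \<Rightarrow> rat fps" where
  "Gj j = Abs_fps (\<lambda>N. if j dvd N then 1 else 0)"
definition Dj :: "nat \<Rightarrow> rat fps" where
  "Dj j = Abs_fps (\<lambda>N. if j dvd N then of_nat (N div j) else 0)"

lemma dvd_diff_iff: "0 < j \<Longrightarrow> j \<le> N \<Longrightarrow> (j dvd (N - j)) = (j dvd (N::nat))"
  by (metis dvd_diff_nat dvd_refl le_add_diff_inverse2 dvd_add_left_iff)

lemma Ej_eq: "0 < j \<Longrightarrow> (1 - fps_X ^ j) * Ej j = fps_X ^ j"
proof (rule fps_ext)
  fix N assume j: "0 < j"
  show "((1 - fps_X ^ j) * Ej j) $ N = (fps_X ^ j :: rat fps) $ N"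
  proof (cases "j \<le> N")
    case True
    then show ?thesis using j dvd_diff_iff[OF j True]
      by (auto simp: one_minus_mult_nth Ej_def fps_X_power_nth)
  next
    case False
    then have "\<not> (j dvd N \<and> 0 < N)" by (auto dest: dvd_imp_le)
    then show ?thesis using False by (auto simp: one_minus_mult_nth Ej_def fps_X_power_nth)
  qed
qed

lemma Gj_eq: "0 < j \<Longrightarrow> (1 - fps_X ^ j) * Gj j = 1"
proof (rule fps_ext)
  fix N assume j: "0 < j"
  show "((1 - fps_X ^ j) * Gj j) $ N = (1 :: rat fps) $ N"
  proof (cases "j \<le> N")
    case True
    then show ?thesis using j dvd_diff_iff[OF j True]
      by (auto simp: one_minus_mult_nth Gj_def)
  next
    case False
    then have "j dvd N \<longleftrightarrow> N = 0" by (auto dest: dvd_imp_le)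
    then show ?thesis using False by (auto simp: one_minus_mult_nth Gj_def)
  qed
qed

lemma Dj_eq: "0 < j \<Longrightarrow> (1 - fps_X ^ j) * Dj j = Ej j"
proof (rule fps_ext)
  fix N assume j: "0 < j"
  show "((1 - fps_X ^ j) * Dj j) $ N = Ej j $ N"
  proof (cases "j \<le> N")
    case True
    have "j dvd N \<Longrightarrow> (N - j) div j = N div j - 1" using True j
    proof -
      assume "j dvd N"
      then obtain k where "N = j * k" by (auto elim!: dvdE)
      moreover have "j * k - j = j * (k - 1)" by (simp add: diff_mult_distrib2)
      ultimately show ?thesis using j by simp
    qed
    moreover have "j dvd N \<Longrightarrow> 1 \<le> N div j" using True j
      by (simp add: div_greater_zero_iff Suc_le_eq)
    ultimately show ?thesis using j dvd_diff_iff[OF j True] True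
      by (auto simp: one_minus_mult_nth Dj_def Ej_def of_nat_diff)
  next
    case False
    then have "j dvd N \<longleftrightarrow> N = 0" by (auto dest: dvd_imp_le)
    then show ?thesis using False by (auto simp: one_minus_mult_nth Dj_def Ej_def)
  qed
qed

definition phi :: "nat \<Rightarrow> nat \<Rightarrow> nat \<Rightarrow> rat" where
  "phi k j m = (if j < k then (if m = 0 then 0 else 1) else if j = k then of_nat m else 1)"

lemma geo_phi_lt: "0 < j \<Longrightarrow> j < k \<Longrightarrow> geo (phi k) j = Ej j"
  by (rule fps_ext) (auto simp: geo_def phi_def Ej_def elim!: dvdE)
lemma geo_phi_gt: "k < j \<Longrightarrow> geo (phi k) j = Gj j"
  by (rule fps_ext) (auto simp: geo_def phi_def Gj_def)
lemma geo_phi_eq: "geo (phi k) k = Dj k"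
  by (rule fps_ext) (auto simp: geo_def phi_def Dj_def)


lemma Ej_inv: "0 < j \<Longrightarrow> Ej j = fps_X ^ j * inverse (1 - fps_X ^ j)"
proof -
  assume j: "0 < j"
  have u: "(1 - fps_X ^ j :: rat fps) $ 0 \<noteq> 0" using j by simp
  have "Ej j = (inverse (1 - fps_X ^ j) * (1 - fps_X ^ j)) * Ej j"
    using inverse_mult_eq_1[OF u] by simp
  also have "\<dots> = inverse (1 - fps_X ^ j) * fps_X ^ j"
    by (simp only: mult.assoc Ej_eq[OF j])
  finally show ?thesis by (simp add: mult.commute)
qed

lemma prod_split3:
  fixes k M :: nat
  assumes "1 \<le> k" "k \<le> M"
  shows "(\<Prod>j=1..M. f j) = (\<Prod>j=1..<k. f j) * f k * (\<Prod>j\<in>{k<..M}. f j)"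
proof -
  have "{1..M} = {1..<k} \<union> (insert k {k<..M})"
  proof (rule set_eqI)
    fix x show "x \<in> {1..M} \<longleftrightarrow> x \<in> {1..<k} \<union> (insert k {k<..M})"
      using assms by (cases "x < k"; cases "x = k") auto
  qed
  then have "(\<Prod>j=1..M. f j) = (\<Prod>j\<in>{1..<k} \<union> (insert k {k<..M}). f j)" by simp
  also have "\<dots> = (\<Prod>j=1..<k. f j) * (\<Prod>j\<in>insert k {k<..M}. f j)"
    by (rule prod.union_disjoint) auto
  also have "(\<Prod>j\<in>insert k {k<..M}. f j) = f k * (\<Prod>j\<in>{k<..M}. f j)" by simp
  finally show ?thesis by (simp add: mult.assoc)
qed

lemma main_k:
  assumes k: "1 \<le> k" "k \<le> M"
  shows "(\<Prod>j=1..M. (1 - fps_X ^ j)) * GF (phi k) M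
         = fps_X ^ (k * (k + 1) div 2) * inverse (1 - fps_X ^ k)"
proof -
  have "(\<Prod>j=1..M. (1 - fps_X ^ j)) * GF (phi k) M = (\<Prod>j=1..M. (1 - fps_X ^ j) * geo (phi k) j)"
    by (simp add: GF_prod prod.distrib)
  also have "\<dots> = (\<Prod>j=1..<k. (1 - fps_X ^ j) * geo (phi k) j) * ((1 - fps_X ^ k) * geo (phi k) k)
                  * (\<Prod>j\<in>{k<..M}. (1 - fps_X ^ j) * geo (phi k) j)"
    by (rule prod_split3[OF k])
  also have "(\<Prod>j=1..<k. (1 - fps_X ^ j) * geo (phi k) j) = (\<Prod>j=1..<k. fps_X ^ j)"
    by (rule prod.cong) (auto simp: geo_phi_lt Ej_eq)
  also have "(1 - fps_X ^ k) * geo (phi k) k = fps_X ^ k * inverse (1 - fps_X ^ k)"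
    using k by (simp add: geo_phi_eq Dj_eq Ej_inv)
  also have "(\<Prod>j\<in>{k<..M}. (1 - fps_X ^ j) * geo (phi k) j) = 1"
    by (rule prod.neutral) (auto simp: geo_phi_gt Gj_eq)
  also have "(\<Prod>j=1..<k. fps_X ^ j) * (fps_X ^ k * inverse (1 - fps_X ^ k)) * 1
      = (\<Prod>j=1..k. fps_X ^ j) * inverse (1 - fps_X ^ k :: rat fps)"
  proof -
    have "{1..k} = insert k {1..<k}" using k by auto
    then have eq: "(\<Prod>j=1..k. fps_X ^ j) = (\<Prod>j=1..<k. fps_X ^ j) * (fps_X ^ k :: rat fps)"
      by (simp add: mult.commute)
    show ?thesis unfolding eq by (simp only: mult.assoc mult_1_right)
  qed
  also have "(\<Prod>j=1..k. fps_X ^ j) = (fps_X ^ (\<Sum>j=1..k. j) :: rat fps)"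
    by (simp add: power_sum)
  also have "(\<Sum>j=1..k. j) = k * (k + 1) div 2"
    using Sum_Icc_nat[of 1 k] by simp
  finally show ?thesis .
qed


lemma n_lam_bound: "\<forall>k\<in>{1..n}. k \<in># lam \<Longrightarrow> n \<le> sum_mset (lam::nat multiset)"
proof (cases "n = 0")
  case False
  assume "\<forall>k\<in>{1..n}. k \<in># lam"
  then have "n \<in># lam" using False by auto
  then show ?thesis by (rule mem_le_sum_mset)
qed simp

lemma n_lam_mem: "k \<in> {1..n_lam lam} \<Longrightarrow> k \<in># lam"
proof -
  assume k: "k \<in> {1..n_lam lam}"
  have "\<forall>k\<in>{1..n_lam lam}. k \<in># lam" unfolding n_lam_def
    by (rule GreatestI_nat[where k = 0 and b = "sum_mset lam"]) (auto intro: n_lam_bound)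
  then show ?thesis using k by blast
qed

lemma n_lam_ge: "\<forall>j\<in>{1..k}. j \<in># lam \<Longrightarrow> k \<le> n_lam lam"
  unfolding n_lam_def
  by (rule Greatest_le_nat[where b = "sum_mset lam"]) (auto intro: n_lam_bound)

lemma n_lam_le: "n_lam lam \<le> sum_mset lam"
  using n_lam_bound n_lam_mem by blast

lemma wt_phi:
  assumes k: "1 \<le> k" "k \<le> M"
  shows "wt (phi k) M lam = (if \<forall>j\<in>{1..<k}. j \<in># lam then of_nat (count lam k) else 0)"
proof -
  have "wt (phi k) M lam = (\<Prod>j=1..<k. phi k j (count lam j)) * phi k k (count lam k)
        * (\<Prod>j\<in>{k<..M}. phi k j (count lam j))"
    unfolding wt_def by (rule prod_split3[OF k])
  also have "(\<Prod>j\<in>{k<..M}. phi k j (count lam j)) = 1"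
    by (rule prod.neutral) (auto simp: phi_def)
  also have "(\<Prod>j=1..<k. phi k j (count lam j)) = (if \<forall>j\<in>{1..<k}. j \<in># lam then 1 else 0)"
  proof (cases "\<forall>j\<in>{1..<k}. j \<in># lam")
    case True
    have "(\<Prod>j=1..<k. phi k j (count lam j)) = 1"
      using True by (intro prod.neutral) (auto simp: phi_def count_eq_zero_iff)
    then show ?thesis using True by simp
  next
    case False
    then obtain j where j: "j \<in> {1..<k}" "j \<notin># lam" by blast
    then have "phi k j (count lam j) = 0" by (simp add: phi_def not_in_iff)
    then have "(\<Prod>j=1..<k. phi k j (count lam j)) = 0"
      using j(1) by (intro prod_zero) auto
    then show ?thesis using False by auto
  qed
  moreover have "phi k k (count lam k) = of_nat (count lam k)" by (simp add: phi_def)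
  ultimately show ?thesis by simp
qed

lemma wt_phi2:
  assumes k: "1 \<le> k" "k \<le> M"
  shows "wt (phi k) M lam = (if k \<le> n_lam lam then of_nat (count lam k) else 0)"
proof (cases "k \<le> n_lam lam")
  case True
  then have "\<forall>j\<in>{1..<k}. j \<in># lam" using n_lam_mem by auto
  then show ?thesis using True by (simp add: wt_phi[OF k])
next
  case False
  have "(if \<forall>j\<in>{1..<k}. j \<in># lam then of_nat (count lam k) else 0) = (0::rat)"
  proof (cases "(\<forall>j\<in>{1..<k}. j \<in># lam) \<and> k \<in># lam")
    case True
    have "\<forall>j\<in>{1..k}. j \<in># lam"
    proof
      fix j assume "j \<in> {1..k}"
      then show "j \<in># lam" using True by (cases "j = k") auto
    qed
    then have "k \<le> n_lam lam" by (rule n_lam_ge)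
    then show ?thesis using False by simp
  next
    case False
    then show ?thesis by (auto simp: count_eq_zero_iff)
  qed
  then show ?thesis using False by (simp add: wt_phi[OF k])
qed

definition Tfin :: "nat \<Rightarrow> rat fps" where
  "Tfin M = (\<Sum>k=1..M. fps_const (of_int ((-1)^(k-1) * int k)) * GF (phi k) M)"

lemma Pm_full: "N \<le> M \<Longrightarrow> Pm N M = partitions N"
  unfolding Pm_def partitions_def using mem_le_sum_mset
  by (auto simp: Suc_le_eq) (meson order_trans)

lemma Tfin_nth:
  assumes NM: "N \<le> M"
  shows "Tfin M $ N = of_int (\<Sum>lam\<in>partitions N. t_s lam)"
proof -
  have "Tfin M $ N = (\<Sum>k=1..M. of_int ((-1)^(k-1) * int k) * (\<Sum>lam\<in>partitions N. wt (phi k) M lam))"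
    by (simp add: Tfin_def fps_sum_nth GF_def Pm_full[OF NM])
  also have "\<dots> = (\<Sum>lam\<in>partitions N. \<Sum>k=1..M. of_int ((-1)^(k-1) * int k) * wt (phi k) M lam)"
    unfolding sum_distrib_left by (rule sum.swap)
  also have "\<dots> = (\<Sum>lam\<in>partitions N. of_int (t_s lam))"
  proof (rule sum.cong)
    fix lam assume lam: "lam \<in> partitions N"
    have nM: "n_lam lam \<le> M" using n_lam_le[of lam] lam NM by (auto simp: partitions_def)
    have "(\<Sum>k=1..M. of_int ((-1)^(k-1) * int k) * wt (phi k) M lam)
        = (\<Sum>k=1..M. if k \<le> n_lam lam then of_int ((-1)^(k-1) * int k) * of_nat (count lam k) else (0::rat))"
      by (rule sum.cong) (auto simp: wt_phi2)
    also have "\<dots> = (\<Sum>k=1..n_lam lam. of_int ((-1)^(k-1) * int k) * of_nat (count lam k))"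
      by (rule sum.mono_neutral_cong_right) (use nM in auto)
    also have "\<dots> = of_int (t_s lam)"
      by (simp add: t_s_def)
    finally show "(\<Sum>k=1..M. of_int ((-1)^(k-1) * int k) * wt (phi k) M lam) = of_int (t_s lam)" .
  qed simp
  finally show ?thesis by simp
qed


lemma A_term_unit: "1 \<le> k \<Longrightarrow> A_term k = fps_const (of_int ((-1)^(k-1) * int k)) * (fps_X ^ (k*(k+1) div 2) * inverse (1 - fps_X ^ k))"
  unfolding A_term_def by (subst fps_divide_unit) (simp_all add: mult.assoc)

lemma main_fin: "(\<Prod>j=1..M. (1 - fps_X ^ j)) * Tfin M = (\<Sum>k=1..M. A_term k)"
proof -
  have "(\<Prod>j=1..M. (1 - fps_X ^ j)) * Tfin M
      = (\<Sum>k=1..M. fps_const (of_int ((-1)^(k-1) * int k)) * ((\<Prod>j=1..M. (1 - fps_X ^ j)) * GF (phi k) M))"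
    unfolding Tfin_def sum_distrib_left by (rule sum.cong) (simp_all add: algebra_simps)
  also have "\<dots> = (\<Sum>k=1..M. A_term k)"
  proof (rule sum.cong)
    fix k assume "k \<in> {1..M}"
    then have k: "1 \<le> k" "k \<le> M" by auto
    show "fps_const (of_int ((-1)^(k-1) * int k)) * ((\<Prod>j=1..M. (1 - fps_X ^ j)) * GF (phi k) M) = A_term k"
      by (simp only: main_k[OF k] A_term_unit[OF k(1)])
  qed simp
  finally show ?thesis .
qed

lemma prod_stab: "N \<le> M \<Longrightarrow> (\<Prod>k=1..M. (1 - fps_X ^ k) :: rat fps) $ N = (\<Prod>k=1..N. (1 - fps_X ^ k) :: rat fps) $ N"
proof (induction M rule: dec_induct)
  case base
  then show ?case by simp
next
  case (step M)
  have "(\<Prod>k=1..Suc M. (1 - fps_X ^ k) :: rat fps) = (1 - fps_X ^ Suc M) * (\<Prod>k=1..M. (1 - fps_X ^ k))"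
    by (simp add: mult.commute)
  then show ?case using step by (simp only: one_minus_mult_nth) simp
qed

lemma A_term_nth: "1 \<le> k \<Longrightarrow> N < k \<Longrightarrow> A_term k $ N = 0"
proof -
  assume k: "1 \<le> k" "N < k"
  have "k * 2 \<le> k * (k + 1)" using k by simp
  then have "k \<le> k * (k + 1) div 2" by linarith
  then have "N < k * (k + 1) div 2" using k by simp
  then show ?thesis unfolding A_term_unit[OF k(1)] by (simp add: fps_X_power_mult_nth)
qed

lemma sum_stab: "N \<le> M \<Longrightarrow> (\<Sum>i<M. A_term (Suc i)) $ N = (\<Sum>i<N. A_term (Suc i)) $ N"
proof (induction M rule: dec_induct)
  case base
  then show ?case by simp
next
  case (step M)
  then show ?case by (simp add: A_term_nth)
qed

lemma lim_stab:
  fixes f :: "nat \<Rightarrow> rat fps"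
  assumes lim: "f \<longlonglongrightarrow> g" and st: "\<And>m. m \<ge> N \<Longrightarrow> f m $ n = f N $ n"
  shows "g $ n = f N $ n"
proof -
  have "eventually (\<lambda>m. f m $ n = g $ n) sequentially"
    using lim tendsto_fps_iff by metis
  then obtain m0 where m0: "\<And>m. m \<ge> m0 \<Longrightarrow> f m $ n = g $ n"
    unfolding eventually_sequentially by blast
  have "g $ n = f (max m0 N) $ n" using m0[of "max m0 N"] by simp
  also have "\<dots> = f N $ n" using st[of "max m0 N"] by simp
  finally show ?thesis .
qed

lemma mult_agree:
  assumes "\<And>i. i \<le> N \<Longrightarrow> a $ i = a' $ i" "\<And>i. i \<le> N \<Longrightarrow> b $ i = b' $ i"
  shows "(a * b) $ N = (a' * b' :: rat fps) $ N"
proof -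
  have "(\<Sum>i=0..N. a $ i * b $ (N - i)) = (\<Sum>i=0..N. a' $ i * b' $ (N - i))"
  proof (rule sum.cong)
    fix i assume "i \<in> {0..N}"
    then have "i \<le> N" "N - i \<le> N" by auto
    then show "a $ i * b $ (N - i) = a' $ i * b' $ (N - i)" using assms by metis
  qed simp
  then show ?thesis by (simp add: fps_mult_nth)
qed

theorem theorem1p3:
  fixes P S :: "rat fps"
  assumes "(\<lambda>N. \<Prod>k=1..N. (1 - fps_X ^ k)) \<longlonglongrightarrow> P"
    and "(\<lambda>n. A_term (Suc n)) sums S"
  shows "inverse P * S = Abs_fps (\<lambda>N. of_int (\<Sum>lam\<in>partitions N. t_s lam))"
proof -
  define T where "T = Abs_fps (\<lambda>N. of_int (\<Sum>lam\<in>partitions N. t_s lam) :: rat)"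
  have Pn: "P $ n = (\<Prod>k=1..n. (1 - fps_X ^ k) :: rat fps) $ n" for n
    by (rule lim_stab[OF assms(1)]) (rule prod_stab)
  have Sn: "S $ n = (\<Sum>i<n. A_term (Suc i)) $ n" for n
    by (rule lim_stab[OF assms(2)[unfolded sums_def]]) (rule sum_stab)
  have PT: "P * T = S"
  proof (rule fps_ext)
    fix N
    have "(P * T) $ N = ((\<Prod>j=1..N. (1 - fps_X ^ j)) * Tfin N) $ N"
    proof (rule mult_agree)
      fix i assume i: "i \<le> N"
      show "P $ i = (\<Prod>j=1..N. (1 - fps_X ^ j)) $ i" using Pn prod_stab[OF i] by simp
      show "T $ i = Tfin N $ i" using Tfin_nth[OF i] by (simp add: T_def)
    qed
    also have "\<dots> = (\<Sum>k=1..N. A_term k) $ N" by (simp only: main_fin)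
    also have "\<dots> = S $ N" using Sn by (simp add: sum.atLeast1_atMost_eq)
    finally show "(P * T) $ N = S $ N" .
  qed
  have P0: "P $ 0 \<noteq> 0" using Pn[of 0] by simp
  have "inverse P * S = (inverse P * P) * T" by (simp add: PT mult.assoc)
  also have "\<dots> = T" using inverse_mult_eq_1[OF P0] by simp
  finally show ?thesis by (simp add: T_def)
qed

end
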